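(* As an identity of formal power series in $q$ with integer coefficients, $$\sum_{n=0}^\infty\big[(q)_\infty-(q)_n\big] =(q)_\infty\sum_{k=1}^\infty\frac{q^k}{1-q^k} +\sum_{r=1}^\infty(-1)^r\Big[(3r-1)q^{r(3r-1)/2}+3r\,q^{r(3r+1)/2}\Big].$$
   Context: For $n$ a nonnegative integer or $n=\infty$, $(a)_n=\prod_{k=1}^n(1-aq^{k-1})$; in particular $(q)_n=\prod_{k=1}^n(1-q^k)$ and $(q)_0=1$. All series are formal power series in $q$ (the sum on the left converges $q$-adically since $(q)_\infty-(q)_n$ is divisible by $q^{n+1}$). *)

theory Defs
  imports "HOL-Computational_Algebra.Formal_Power_Series"
begin

definition qpoch :: "nat \<Rightarrow> int fps" where
  "qpoch n = (\<Prod>k=1..n. 1 - fps_X ^ k)"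

text \<open>(q)_infinity: the q-adic limit of (q)_n (fps carries the q-adic metric).\<close>
definition qpoch_inf :: "int fps" where
  "qpoch_inf = lim qpoch"

text \<open>q^k / (1 - q^k): the quotient of q^k by the unit 1 - q^k in Z[[q]] (k >= 1).\<close>
definition qfrac :: "nat \<Rightarrow> int fps" where
  "qfrac k = (THE g. (1 - fps_X ^ k) * g = fps_X ^ k)"

end

theory Submission imports Defs "HOL-Computational_Algebra.Polynomial" begin

unbundle fps_syntax

definition low :: "nat \<Rightarrow> 'a::zero fps \<Rightarrow> bool" where
  "low m f \<longleftrightarrow> (\<forall>k<m. f $ k = 0)"

lemma low_X: "low m (fps_X ^ m * (f::'a::comm_semiring_1 fps))"
  by (simp add: low_def fps_X_power_mult_nth)

lemma low_mult_left: "low m (f::'a::comm_semiring_1 fps) \<Longrightarrow> low m (g * f)"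
  unfolding low_def fps_mult_nth by (auto intro!: sum.neutral)

lemma low_mult_right: "low m (f::'a::comm_semiring_1 fps) \<Longrightarrow> low m (f * g)"
  using low_mult_left[of m f g] by (simp add: mult.commute)

lemma low_mono: "low m f \<Longrightarrow> m' \<le> m \<Longrightarrow> low m' f"
  by (auto simp: low_def)

lemma low_diff: "low m (f::'a::group_add fps) \<Longrightarrow> low m g \<Longrightarrow> low m (f - g)"
  by (auto simp: low_def)

lemma low_add: "low m (f::'a::monoid_add fps) \<Longrightarrow> low m g \<Longrightarrow> low m (f + g)"
  by (auto simp: low_def)

definition fsum :: "(nat \<Rightarrow> 'a::comm_monoid_add fps) \<Rightarrow> 'a fps" where
  "fsum f = Abs_fps (\<lambda>k. \<Sum>n\<le>k. f n $ k)"

lemma fsum_nth: "fsum f $ k = (\<Sum>n\<le>k. f n $ k)"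
  by (simp add: fsum_def)

lemma fsum_partial:
  assumes "\<And>n. low n (f n)" "k < N"
  shows "(\<Sum>n<N. f n) $ k = fsum f $ k"
proof -
  have "(\<Sum>n<N. f n) $ k = (\<Sum>n<N. f n $ k)" by (simp add: fps_sum_nth)
  also have "\<dots> = (\<Sum>n\<le>k. f n $ k)"
    by (rule sum.mono_neutral_right) (use assms in \<open>auto simp: low_def\<close>)
  finally show ?thesis by (simp add: fsum_nth)
qed

lemma fsum_sums:
  fixes f :: "nat \<Rightarrow> 'a::ab_group_add fps"
  assumes "\<And>n. low n (f n)"
  shows "f sums fsum f"
  unfolding sums_def tendsto_fps_iff
proof
  fix k
  show "\<forall>\<^sub>F N in sequentially. (\<Sum>n<N. f n) $ k = fsum f $ k"
    unfolding eventually_sequentially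
    by (rule exI[of _ "Suc k"]) (auto intro!: fsum_partial assms)
qed

lemma fsum_add: "fsum (\<lambda>n. f n + g n) = fsum f + fsum g"
  by (simp add: fps_eq_iff fsum_nth sum.distrib)

lemma fsum_diff: "fsum (\<lambda>n. (f n :: 'a::ab_group_add fps) - g n) = fsum f - fsum g"
  by (simp add: fps_eq_iff fsum_nth sum_subtractf)

lemma fsum_uminus: "fsum (\<lambda>n. - (f n :: 'a::ab_group_add fps)) = - fsum f"
  by (simp add: fps_eq_iff fsum_nth sum_negf)

lemma eqto_mult:
  assumes "\<And>j. j \<le> k \<Longrightarrow> f $ j = f' $ j" "\<And>j. j \<le> k \<Longrightarrow> g $ j = g' $ j"
  shows "((f::'a::comm_semiring_1 fps) * g) $ k = (f' * g') $ k"
  unfolding fps_mult_nth using assms by (intro sum.cong) auto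

primrec pp :: "'a::comm_ring_1 fps \<Rightarrow> nat \<Rightarrow> 'a fps" where
  "pp y 0 = 1"
| "pp y (Suc m) = pp y m * (1 - y * fps_X ^ Suc m)"

lemma pp_shift: "pp y (Suc m) = (1 - y * fps_X) * pp (y * fps_X) m"
proof (induction m)
  case 0 then show ?case by simp
next
  case (Suc m)
  have "pp y (Suc (Suc m)) = (1 - y * fps_X) * pp (y * fps_X) m * (1 - y * fps_X ^ Suc (Suc m))"
    using Suc by simp
  also have "\<dots> = (1 - y * fps_X) * pp (y * fps_X) (Suc m)"
    by (simp add: mult.assoc mult.left_commute)
  finally show ?case .
qed

definition tm :: "'a::comm_ring_1 fps \<Rightarrow> nat \<Rightarrow> 'a fps" where
  "tm y n = fps_X ^ Suc n * (y ^ Suc (Suc n) * pp y n)"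

definition bb :: "'a::comm_ring_1 fps \<Rightarrow> nat \<Rightarrow> 'a fps" where
  "bb y M = fps_X ^ M * (y ^ M * pp (y * fps_X) M)"

definition Om :: "'a::comm_ring_1 fps \<Rightarrow> 'a fps" where
  "Om y = 1 - fsum (tm y)"

lemma FI_ring:
  fixes y X XM yM u S :: "'a::comm_ring_1"
  shows "y^2 * X + y^3 * X^2 * (1 - XM * (yM * u) - S) + XM * X^2 * (yM * y^3 * ((1 - y * X) * u)) =
    y^2 * X + y^3 * X^2 * (1 - XM * X * (yM * y * (u * (1 - y * X * XM * X))) - (S + XM * X * (yM * y^2 * (XM * X^2 * u))))"
  by (simp add: algebra_simps power2_eq_square power3_eq_cube)

lemma FI: "(\<Sum>n<Suc M. tm y n) = y^2 * fps_X + y^3 * fps_X^2 * (1 - bb y M - (\<Sum>n<M. tm (y * fps_X) n))"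
proof (induction M)
  case 0 then show ?case by (simp add: tm_def bb_def power2_eq_square power3_eq_cube)
next
  case (Suc M)
  define u where "u = pp (y * fps_X) M"
  have e1: "tm y (Suc M) = fps_X ^ M * fps_X^2 * (y^M * y^3 * ((1 - y * fps_X) * u))"
    unfolding tm_def u_def pp_shift by (simp add: power_add mult_ac numeral_3_eq_3 power2_eq_square)
  have e2: "bb y (Suc M) = fps_X ^ M * fps_X * (y^M * y * (u * (1 - y * fps_X * fps_X ^ M * fps_X)))"
    by (simp add: bb_def u_def mult.assoc mult.left_commute mult.commute)
  have e3: "bb y M = fps_X ^ M * (y^M * u)" by (simp add: bb_def u_def)
  have e4: "tm (y * fps_X) M = fps_X ^ M * fps_X * (y^M * y^2 * (fps_X^M * fps_X^2 * u))"
    by (simp add: tm_def u_def power_mult_distrib mult.assoc mult.left_commute mult.commute power2_eq_square)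
  define S where "S = (\<Sum>n<M. tm (y * fps_X) n)"
  have "(\<Sum>n<Suc (Suc M). tm y n) = (\<Sum>n<Suc M. tm y n) + tm y (Suc M)" by simp
  also have "\<dots> = y^2 * fps_X + y^3 * fps_X^2 * (1 - bb y M - S) + tm y (Suc M)"
    using Suc by (simp add: S_def)
  also have "\<dots> = y^2 * fps_X + y^3 * fps_X^2 * (1 - bb y (Suc M) - (S + tm (y * fps_X) M))"
    unfolding e1 e2 e3 e4 by (rule FI_ring)
  also have "S + tm (y * fps_X) M = (\<Sum>n<Suc M. tm (y * fps_X) n)" by (simp add: S_def)
  finally show ?case .
qed


lemma low_tm: "low n (tm y n)"
  unfolding tm_def by (rule low_mono[OF low_X]) simp

lemma low_bb: "low M (bb y M)"
  unfolding bb_def by (rule low_X)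

lemma F1: "Om y = 1 - y^2 * fps_X - y^3 * fps_X^2 * Om (y * fps_X)"
proof (rule fps_ext)
  fix k
  define M where "M = Suc k"
  have "fsum (tm y) $ k = (\<Sum>n<Suc M. tm y n) $ k"
    by (rule fsum_partial[symmetric]) (auto simp: low_tm M_def)
  also have "\<dots> = (y^2 * fps_X + y^3 * fps_X^2 * (1 - bb y M - (\<Sum>n<M. tm (y * fps_X) n))) $ k"
    by (simp only: FI)
  also have "\<dots> = (y^2 * fps_X + y^3 * fps_X^2 * (1 - fsum (tm (y * fps_X)))) $ k"
  proof -
    have "(y^3 * fps_X^2 * (1 - bb y M - (\<Sum>n<M. tm (y * fps_X) n))) $ k
        = (y^3 * fps_X^2 * (1 - fsum (tm (y * fps_X)))) $ k"
    proof (rule eqto_mult)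
      fix j assume j: "j \<le> k"
      have "bb y M $ j = 0" using low_bb[of M y] j by (auto simp: low_def M_def)
      moreover have "(\<Sum>n<M. tm (y * fps_X) n) $ j = fsum (tm (y * fps_X)) $ j"
        by (rule fsum_partial) (use j in \<open>auto simp: low_tm M_def\<close>)
      ultimately show "(1 - bb y M - (\<Sum>n<M. tm (y * fps_X) n)) $ j = (1 - fsum (tm (y * fps_X))) $ j"
        by simp
    qed simp
    then show ?thesis by simp
  qed
  finally show "Om y $ k = (1 - y^2 * fps_X - y^3 * fps_X^2 * Om (y * fps_X)) $ k"
    by (simp add: Om_def)
qed

primrec e :: "nat \<Rightarrow> nat" where
  "e 0 = 0"
| "e (Suc n) = e n + 3 * n + 2"

lemma e_ge: "n \<le> e n"
  by (induction n) auto

lemma e_double: "2 * e n = n * (3 * n + 1)"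
  by (induction n) (auto simp: algebra_simps)

definition th :: "'a::comm_ring_1 fps \<Rightarrow> nat \<Rightarrow> 'a fps" where
  "th y n = fps_X ^ e n * ((-1)^n * y^(3*n) * (1 - y^2 * fps_X^(2*n+1)))"

lemma low_th: "low n (th y n)"
  unfolding th_def by (rule low_mono[OF low_X]) (rule e_ge)

lemma IT_ring:
  fixes s XE XN X yN y O1 :: "'a::comm_ring_1"
  shows "s * XE * yN^3 * (1 - (y * XN)^2 * X - (y * XN)^3 * X^2 * O1) =
     XE * (s * yN^3 * (1 - y^2 * (XN^2 * X))) + (- s) * (XE * XN^3 * X^2) * (yN^3 * y^3) * O1"
  by (simp add: algebra_simps power2_eq_square power3_eq_cube)

lemma IT: "Om y = (\<Sum>n<N. th y n) + (-1)^N * fps_X ^ e N * y^(3*N) * Om (y * fps_X^N)"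
proof (induction N)
  case 0 then show ?case by simp
next
  case (Suc N)
  have F: "Om (y * fps_X^N) = 1 - (y * fps_X^N)^2 * fps_X - (y * fps_X^N)^3 * fps_X^2 * Om (y * fps_X^Suc N)"
  proof -
    have eq: "y * fps_X^N * fps_X = y * fps_X^Suc N" by (simp add: mult_ac)
    show ?thesis using F1[of "y * fps_X^N"] by (simp only: eq)
  qed
  have th: "th y N = fps_X ^ e N * ((-1)^N * (y^N)^3 * (1 - y^2 * ((fps_X^N)^2 * fps_X)))"
    by (simp add: th_def power_mult[symmetric] power_add[symmetric] mult.commute)
  have r: "(-1)^Suc N * fps_X ^ e (Suc N) * y^(3*Suc N) = (- ((-1)^N)) * (fps_X ^ e N * (fps_X^N)^3 * fps_X^2) * ((y^N)^3 * y^3)"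
    by (simp add: power_mult[symmetric] power_add[symmetric] mult.commute)
  have yp: "y^(3*N) = (y^N)^3" by (simp add: power_mult[symmetric] mult.commute)
  have "Om y = (\<Sum>n<N. th y n) + (-1)^N * fps_X ^ e N * (y^N)^3 *
      (1 - (y * fps_X^N)^2 * fps_X - (y * fps_X^N)^3 * fps_X^2 * Om (y * fps_X^Suc N))"
    by (simp only: Suc.IH F yp)
  also have "\<dots> = (\<Sum>n<N. th y n) + (fps_X ^ e N * ((-1)^N * (y^N)^3 * (1 - y^2 * ((fps_X^N)^2 * fps_X)))
      + (- ((-1)^N)) * (fps_X ^ e N * (fps_X^N)^3 * fps_X^2) * ((y^N)^3 * y^3) * Om (y * fps_X^Suc N))"
    by (simp only: IT_ring)
  also have "\<dots> = (\<Sum>n<Suc N. th y n) + (-1)^Suc N * fps_X ^ e (Suc N) * y^(3*Suc N) * Om (y * fps_X^Suc N)"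
    by (simp only: sum.lessThan_Suc r th add.assoc)
  finally show ?case .
qed

lemma Fine: "Om y = fsum (th y)"
proof (rule fps_ext)
  fix k
  define N where "N = Suc k"
  have "Om y $ k = (\<Sum>n<N. th y n) $ k + ((-1)^N * fps_X ^ e N * y^(3*N) * Om (y * fps_X^N)) $ k"
    by (subst IT[of y N]) simp
  also have "((-1)^N * fps_X ^ e N * y^(3*N) * Om (y * fps_X^N)) $ k = 0"
  proof -
    have "low (e N) (fps_X ^ e N * ((-1)^N * y^(3*N) * Om (y * fps_X^N)))" by (rule low_X)
    moreover have "k < e N" using e_ge[of N] by (simp add: N_def)
    ultimately show ?thesis by (simp add: low_def mult_ac)
  qed
  also have "(\<Sum>n<N. th y n) $ k = fsum (th y) $ k"
    by (rule fsum_partial) (auto simp: low_th N_def)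
  finally show "Om y $ k = fsum (th y) $ k" by simp
qed


definition E0 :: "int poly fps \<Rightarrow> int fps" where
  "E0 f = Abs_fps (\<lambda>k. coeff (f $ k) 0)"

definition E1 :: "int poly fps \<Rightarrow> int fps" where
  "E1 f = Abs_fps (\<lambda>k. coeff (f $ k) 1)"

lemma E0_nth [simp]: "E0 f $ k = coeff (f $ k) 0" by (simp add: E0_def)
lemma E1_nth [simp]: "E1 f $ k = coeff (f $ k) 1" by (simp add: E1_def)

lemma E0_add [simp]: "E0 (f + g) = E0 f + E0 g" by (simp add: fps_eq_iff)
lemma E1_add [simp]: "E1 (f + g) = E1 f + E1 g" by (simp add: fps_eq_iff)
lemma E0_diff [simp]: "E0 (f - g) = E0 f - E0 g" by (simp add: fps_eq_iff)
lemma E1_diff [simp]: "E1 (f - g) = E1 f - E1 g" by (simp add: fps_eq_iff)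
lemma E0_uminus [simp]: "E0 (- f) = - E0 f" by (simp add: fps_eq_iff)
lemma E1_uminus [simp]: "E1 (- f) = - E1 f" by (simp add: fps_eq_iff)
lemma E0_one [simp]: "E0 1 = 1" by (simp add: fps_eq_iff)
lemma E1_one [simp]: "E1 1 = 0" by (simp add: fps_eq_iff)
lemma E0_X [simp]: "E0 fps_X = fps_X" by (simp add: fps_eq_iff fps_X_nth)
lemma E1_X [simp]: "E1 fps_X = 0" by (simp add: fps_eq_iff fps_X_nth)

lemma E0_mult [simp]: "E0 (f * g) = E0 f * E0 g"
  by (simp add: fps_eq_iff fps_mult_nth coeff_sum coeff_mult_0)

lemma coeff_mult_1: "coeff (p * q) (Suc 0) = coeff p 0 * coeff q (Suc 0) + coeff p (Suc 0) * coeff (q::int poly) 0"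
  by (simp add: coeff_mult atMost_Suc)

lemma E1_mult [simp]: "E1 (f * g) = E0 f * E1 g + E1 f * E0 g"
  by (simp add: fps_eq_iff fps_mult_nth coeff_sum coeff_mult_1 sum.distrib)

lemma E0_power [simp]: "E0 (f ^ n) = E0 f ^ n"
  by (induction n) auto

lemma E1_power0: "E1 f = 0 \<Longrightarrow> E1 (f ^ n) = 0"
  by (induction n) auto

lemma E1_power1: "E0 f = 1 \<Longrightarrow> E1 (f ^ n) = of_nat n * E1 f"
  by (induction n) (auto simp: algebra_simps)

lemma E0_sum: "E0 (sum f A) = (\<Sum>i\<in>A. E0 (f i))"
  by (simp add: fps_eq_iff fps_sum_nth coeff_sum)

lemma E1_sum: "E1 (sum f A) = (\<Sum>i\<in>A. E1 (f i))"
  by (simp add: fps_eq_iff fps_sum_nth coeff_sum)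

lemma E0_fsum: "E0 (fsum f) = fsum (\<lambda>n. E0 (f n))"
  by (simp add: fps_eq_iff fsum_nth coeff_sum)

lemma E1_fsum: "E1 (fsum f) = fsum (\<lambda>n. E1 (f n))"
  by (simp add: fps_eq_iff fsum_nth coeff_sum)

lemma E1_Xpow [simp]: "E1 (fps_X ^ n) = 0" by (rule E1_power0) simp

lemma E1_m1pow [simp]: "E1 ((-1) ^ n) = 0" by (rule E1_power0) simp

definition y0 :: "int poly fps" where "y0 = fps_const [:1, 1:]"

lemma E0_y0 [simp]: "E0 y0 = 1" by (simp add: fps_eq_iff y0_def)
lemma E1_y0 [simp]: "E1 y0 = 1" by (simp add: fps_eq_iff y0_def)

lemma E1_y0pow [simp]: "E1 (y0 ^ n) = of_nat n" by (simp add: E1_power1)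

lemma qpoch_Suc: "qpoch (Suc n) = qpoch n * (1 - fps_X ^ Suc n)"
  unfolding qpoch_def by (simp add: prod.nat_ivl_Suc' mult.commute)

lemma qpoch_0: "qpoch 0 = 1" by (simp add: qpoch_def)

lemma E0_pp [simp]: "E0 (pp y0 n) = qpoch n"
  by (induction n) (auto simp: qpoch_Suc qpoch_0)

definition d :: "nat \<Rightarrow> int fps" where "d n = E1 (pp y0 n)"

lemma d_Suc: "d (Suc n) = d n * (1 - fps_X ^ Suc n) - qpoch n * fps_X ^ Suc n"
  by (simp add: d_def algebra_simps)

lemma d_0: "d 0 = 0" by (simp add: d_def)

lemma pp_tel: "(\<Sum>n<N. y * fps_X ^ Suc n * pp y n) = 1 - pp y N"
  by (induction N) (auto simp: algebra_simps)


definition gq :: "nat \<Rightarrow> int fps" where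
  "gq k = Abs_fps (\<lambda>i. if 0 < i \<and> k dvd i then 1 else 0)"

lemma gq_eq: assumes "0 < k" shows "(1 - fps_X ^ k) * gq k = fps_X ^ k"
proof (rule fps_ext)
  fix i
  have "((1 - fps_X ^ k) * gq k) $ i = gq k $ i - (fps_X ^ k * gq k) $ i"
    by (simp add: algebra_simps)
  also have "\<dots> = (fps_X ^ k :: int fps) $ i"
  proof (cases "i < k")
    case True
    then have "\<not> (0 < i \<and> k dvd i)" using dvd_imp_le by fastforce
    then show ?thesis using True by (simp add: fps_X_power_mult_nth gq_def)
  next
    case False
    then show ?thesis using assms
      by (auto simp: fps_X_power_mult_nth gq_def dvd_diff_nat le_imp_diff_is_add)
  qed
  finally show "((1 - fps_X ^ k) * gq k) $ i = (fps_X ^ k :: int fps) $ i" .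
qed

lemma qfrac_eq_gq: assumes "0 < k" shows "qfrac k = gq k"
  unfolding qfrac_def
proof (rule the_equality)
  show "(1 - fps_X ^ k) * gq k = fps_X ^ k" by (rule gq_eq[OF assms])
next
  fix g assume g: "(1 - fps_X ^ k) * g = (fps_X ^ k :: int fps)"
  have nz: "(1 - fps_X ^ k :: int fps) \<noteq> 0"
  proof
    assume "(1 - fps_X ^ k :: int fps) = 0"
    then have "(1 - fps_X ^ k :: int fps) $ 0 = 0" by simp
    then show False using assms by simp
  qed
  from g gq_eq[OF assms] have "(1 - fps_X ^ k) * g = (1 - fps_X ^ k) * gq k" by simp
  then show "g = gq k" using nz by simp
qed

lemma qfrac_eq: "0 < k \<Longrightarrow> (1 - fps_X ^ k) * qfrac k = fps_X ^ k"
  using gq_eq qfrac_eq_gq by simp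

lemma low_qfrac: "low k (qfrac k)"
proof (cases "k = 0")
  case True then show ?thesis by (simp add: low_def)
next
  case False
  then show ?thesis
    by (auto simp: low_def qfrac_eq_gq gq_def dest: dvd_imp_le)
qed

definition H :: "nat \<Rightarrow> int fps" where "H N = (\<Sum>k<N. qfrac (Suc k))"

lemma d_H: "- d N = qpoch N * H N"
proof (induction N)
  case 0 then show ?case by (simp add: d_0 H_def)
next
  case (Suc N)
  have q: "(1 - fps_X ^ Suc N) * qfrac (Suc N) = fps_X ^ Suc N" by (rule qfrac_eq) simp
  have "- d (Suc N) = (- d N) * (1 - fps_X ^ Suc N) + qpoch N * fps_X ^ Suc N"
    by (simp add: d_Suc algebra_simps)
  also have "\<dots> = qpoch N * H N * (1 - fps_X ^ Suc N) + qpoch N * ((1 - fps_X ^ Suc N) * qfrac (Suc N))"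
    by (simp only: Suc.IH q)
  also have "\<dots> = qpoch (Suc N) * H (Suc N)"
    by (simp add: qpoch_Suc H_def algebra_simps)
  finally show ?case .
qed

definition P :: "int fps" where "P = 1 - fsum (\<lambda>m. fps_X ^ Suc m * qpoch m)"

lemma qpoch_tel: "qpoch n = 1 - (\<Sum>m<n. fps_X ^ Suc m * qpoch m)"
  by (induction n) (auto simp: qpoch_0 qpoch_Suc algebra_simps)

lemma low_Xq: "low m (fps_X ^ Suc m * (f::int fps))"
  by (rule low_mono[OF low_X]) simp

lemma qpoch_P: "k < n \<Longrightarrow> qpoch n $ k = P $ k"
proof -
  assume k: "k < n"
  have "(\<Sum>m<n. fps_X ^ Suc m * qpoch m) $ k = fsum (\<lambda>m. fps_X ^ Suc m * qpoch m) $ k"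
    by (rule fsum_partial[OF low_Xq k])
  then show ?thesis unfolding P_def by (subst qpoch_tel) simp
qed

lemma qpoch_inf_P: "qpoch_inf = P"
  unfolding qpoch_inf_def
proof (rule limI)
  show "qpoch \<longlonglongrightarrow> P"
    unfolding tendsto_fps_iff eventually_sequentially
    using qpoch_P by (metis Suc_le_lessD)
qed

definition D :: "int fps" where "D = fsum (\<lambda>k. qfrac (Suc k))"

lemma low_qfracS: "low k (qfrac (Suc k))"
  by (rule low_mono[OF low_qfrac]) simp

lemma D_suminf: "(\<Sum>k. qfrac (Suc k)) = D"
  unfolding D_def by (rule sums_unique[symmetric], rule fsum_sums, rule low_qfracS)

definition K :: "nat \<Rightarrow> int fps" where "K n = fps_X ^ Suc n * (d n + qpoch n)"
definition L :: "nat \<Rightarrow> int fps" where "L n = fps_X ^ Suc n * (of_nat (Suc n) * qpoch n)"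

lemma K_sum: "(\<Sum>n<N. K n) = - d N"
proof -
  have "E1 (\<Sum>n<N. y0 * fps_X ^ Suc n * pp y0 n) = E1 (1 - pp y0 N)" by (simp only: pp_tel)
  then show ?thesis by (simp add: E1_sum K_def d_def algebra_simps)
qed

lemma fsum_K: "fsum K = P * D"
proof (rule fps_ext)
  fix k
  define N where "N = Suc k"
  have "fsum K $ k = (\<Sum>n<N. K n) $ k"
  proof (rule fsum_partial[symmetric])
    show "\<And>n. low n (K n)" unfolding K_def by (rule low_Xq)
  qed (simp add: N_def)
  also have "\<dots> = (qpoch N * H N) $ k" by (simp add: K_sum d_H)
  also have "\<dots> = (P * D) $ k"
  proof (rule eqto_mult)
    fix j assume "j \<le> k"
    then show "qpoch N $ j = P $ j" by (intro qpoch_P) (simp add: N_def)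
    show "H N $ j = D $ j" unfolding H_def D_def
      by (rule fsum_partial) (use \<open>j \<le> k\<close> in \<open>auto simp: N_def low_qfracS\<close>)
  qed
  finally show "fsum K $ k = (P * D) $ k" .
qed

lemma E1_tm: "E1 (tm y0 n) = K n + L n"
  by (simp add: tm_def K_def L_def d_def algebra_simps)

lemma LHS_fin: "(\<Sum>n<N. qpoch N - qpoch n) = - (\<Sum>n<N. L n)"
proof (induction N)
  case 0 then show ?case by simp
next
  case (Suc N)
  have "(\<Sum>n<Suc N. qpoch (Suc N) - qpoch n) = (\<Sum>n<N. (qpoch N - qpoch n) + (qpoch (Suc N) - qpoch N)) + (qpoch (Suc N) - qpoch N)"
    by (simp add: algebra_simps)
  also have "\<dots> = - (\<Sum>n<N. L n) + of_nat N * (qpoch (Suc N) - qpoch N) + (qpoch (Suc N) - qpoch N)"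
    by (simp only: sum.distrib Suc.IH sum_constant card_lessThan)
  also have "\<dots> = - (\<Sum>n<Suc N. L n)"
    by (simp add: L_def qpoch_Suc algebra_simps)
  finally show ?case .
qed

lemma LHS_sums: "(\<lambda>n. P - qpoch n) sums (- fsum L)"
  unfolding sums_def tendsto_fps_iff eventually_sequentially
proof (intro allI exI[of _ "Suc _"] impI)
  fix k N assume N: "Suc k \<le> N"
  have "(\<Sum>n<N. P - qpoch n) $ k = (\<Sum>n<N. P $ k - qpoch n $ k)" by (simp add: fps_sum_nth)
  also have "\<dots> = (\<Sum>n<N. qpoch N $ k - qpoch n $ k)" using N by (simp add: qpoch_P)
  also have "\<dots> = (\<Sum>n<N. qpoch N - qpoch n) $ k" by (simp add: fps_sum_nth)
  also have "\<dots> = - fsum L $ k"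
  proof -
    have "(\<Sum>n<N. L n) $ k = fsum L $ k"
      by (rule fsum_partial) (use N in \<open>auto simp only: L_def low_Xq Suc_le_lessD\<close>)
    then show ?thesis by (simp add: LHS_fin)
  qed
  finally show "(\<Sum>n<N. P - qpoch n) $ k = (- fsum L) $ k" by simp
qed


definition A :: "nat \<Rightarrow> int fps" where
  "A n = fps_X ^ e n * ((-1)^n * of_nat (3*n))"
definition B :: "nat \<Rightarrow> int fps" where
  "B n = fps_X ^ e n * ((-1)^n * of_nat (3*n+2) * fps_X^(2*n+1))"

lemma E1_th: "E1 (th y0 n) = A n - B n"
  by (simp add: th_def A_def B_def algebra_simps)

lemma low_A: "low n (A n)"
  unfolding A_def by (rule low_mono[OF low_X]) (rule e_ge)

lemma low_B: "low n (B n)"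
  unfolding B_def by (rule low_mono[OF low_X]) (rule e_ge)

lemma fsum_A_shift: "fsum A = fsum (\<lambda>r. A (Suc r))"
proof (rule fps_ext)
  fix k
  have z: "A (Suc k) $ k = 0" using low_A[of "Suc k"] by (simp add: low_def)
  have "fsum A $ k = (\<Sum>n\<le>Suc k. A n $ k)" by (simp add: fsum_nth z)
  also have "\<dots> = A 0 $ k + (\<Sum>r\<le>k. A (Suc r) $ k)" by (rule sum.atMost_Suc_shift)
  also have "A 0 = 0" by (simp add: A_def)
  finally show "fsum A $ k = fsum (\<lambda>r. A (Suc r)) $ k" by (simp add: fsum_nth)
qed

lemma m1_pow: "(-1 :: int fps)^n = fps_const ((-1)^n)"
  by (induction n) auto

lemma sign_const: "(-1)^n * (of_nat m :: int fps) = fps_const ((-1)^n * int m)"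
  by (simp add: m1_pow fps_of_nat[symmetric])

lemma ex1: "Suc r * (3 * Suc r - 1) div 2 = e r + (2 * r + 1)"
proof -
  have "Suc r * (3 * Suc r - 1) = 2 * e r + 2 * (2 * r + 1)"
    using e_double[of r] by (simp add: algebra_simps)
  then show ?thesis by simp
qed

lemma ex2: "Suc r * (3 * Suc r + 1) div 2 = e (Suc r)"
  by (subst e_double[symmetric]) simp

lemma Rt_eq: "(\<lambda>r. let r' = Suc r in
                 fps_const ((-1) ^ r' * (3 * int r' - 1)) * fps_X ^ (r' * (3 * r' - 1) div 2)
               + fps_const ((-1) ^ r' * (3 * int r')) * fps_X ^ (r' * (3 * r' + 1) div 2))
      = (\<lambda>r. A (Suc r) - B r)"
proof (rule ext)
  fix r
  have c1: "(-1 :: int) ^ Suc r * (3 * int (Suc r) - 1) = - ((-1)^r * int (3*r+2))" by simp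
  have c2: "(-1 :: int) ^ Suc r * (3 * int (Suc r)) = (-1)^Suc r * int (3 * Suc r)" by simp
  have b: "B r = fps_const ((-1)^r * int (3*r+2)) * fps_X ^ (e r + (2*r+1))"
    unfolding B_def sign_const power_add by (simp only: mult.assoc mult.left_commute)
  have a: "A (Suc r) = fps_const ((-1)^Suc r * int (3 * Suc r)) * fps_X ^ e (Suc r)"
    unfolding A_def sign_const[symmetric] by (simp only: mult.commute)
  show "(let r' = Suc r in
                 fps_const ((-1) ^ r' * (3 * int r' - 1)) * fps_X ^ (r' * (3 * r' - 1) div 2)
               + fps_const ((-1) ^ r' * (3 * int r')) * fps_X ^ (r' * (3 * r' + 1) div 2))
        = A (Suc r) - B r"
    unfolding Let_def ex1 ex2 c1 c2 a b by (simp del: fps_const_neg add: fps_const_neg[symmetric])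
qed

theorem theorem1:
  shows "(\<lambda>n. qpoch_inf - qpoch n) sums
           (qpoch_inf * (\<Sum>k. qfrac (Suc k))
            + (\<Sum>r. let r' = Suc r in
                 fps_const ((-1) ^ r' * (3 * int r' - 1)) * fps_X ^ (r' * (3 * r' - 1) div 2)
               + fps_const ((-1) ^ r' * (3 * int r')) * fps_X ^ (r' * (3 * r' + 1) div 2)))"
proof -
  have lowR: "\<And>r. low r (A (Suc r) - B r)"
    by (intro low_diff low_B) (rule low_mono[OF low_A], simp)
  have R: "(\<Sum>r. A (Suc r) - B r) = fsum A - fsum B"
    by (subst sums_unique[OF fsum_sums[OF lowR], symmetric]) (simp add: fsum_diff fsum_A_shift)
  have 1: "E1 (Om y0) = - (fsum K + fsum L)"
    by (simp add: Om_def E1_fsum E1_tm fsum_add)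
  have 2: "E1 (Om y0) = fsum A - fsum B"
    by (simp add: Fine E1_fsum E1_th fsum_diff)
  have "- fsum L = P * D + (fsum A - fsum B)"
    using 1 2 fsum_K by (simp add: algebra_simps)
  then show ?thesis
    using LHS_sums unfolding Rt_eq R D_suminf qpoch_inf_P by simp
qed

end
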